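(* The matroid $V_{10}/5\setminus 7$ has the half-plane property; equivalently, the polynomial $\frac{\partial f_{10}}{\partial x_5}\big|_{x_7=0}$ is stable.
   Context: $V_{10}$ is the matroid on $\{1,\dots,10\}$ whose bases are all $4$-element subsets of $\{1,\dots,10\}$ except $\{1,2,3,4\},\{1,2,5,6\},\{1,2,7,8\},\{1,2,9,10\},\{3,4,5,6\},\{5,6,7,8\},\{7,8,9,10\}$, and $f_{10}=\sum_{B}\prod_{i\in B}x_i$ (sum over bases $B$ of $V_{10}$) is its basis generating polynomial. For a matroid $M$ and element $e$, the deletion $M\setminus e$ has as bases the bases of $M$ not containing $e$ (basis generating polynomial: set $x_e=0$), and the contraction $M/e$ has as bases the sets $B\setminus\{e\}$ for bases $B$ of $M$ containing $e$ (basis generating polynomial: $\partial/\partial x_e$). $V_{10}/5\setminus 7$ means $(V_{10}/5)\setminus 7$. A homogeneous real polynomial $f$ is stable if for all vectors $v$ with all entries positive and all real vectors $w$, $f(tv+w)\in\mathbb{R}[t]$ has only real roots; a matroid has the half-plane property if its basis generating polynomial is stable. *)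

theory Defs
  imports Complex_Main
begin

definition V10_bases :: "nat set set" where
  "V10_bases = {B. B \<subseteq> {1..10} \<and> card B = 4}
     - {{1,2,3,4}, {1,2,5,6}, {1,2,7,8}, {1,2,9,10}, {3,4,5,6}, {5,6,7,8}, {7,8,9,10}}"

definition deletion_bases :: "nat set set \<Rightarrow> nat \<Rightarrow> nat set set" where
  "deletion_bases Bs e = {B \<in> Bs. e \<notin> B}"

definition contraction_bases :: "nat set set \<Rightarrow> nat \<Rightarrow> nat set set" where
  "contraction_bases Bs e = (\<lambda>B. B - {e}) ` {B \<in> Bs. e \<in> B}"

definition basis_gen_poly :: "nat set set \<Rightarrow> (nat \<Rightarrow> 'a::comm_ring_1) \<Rightarrow> 'a" where
  "basis_gen_poly Bs x = (\<Sum>B\<in>Bs. \<Prod>i\<in>B. x i)"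

definition stable :: "nat set \<Rightarrow> ((nat \<Rightarrow> complex) \<Rightarrow> complex) \<Rightarrow> bool" where
  "stable E f \<longleftrightarrow>
     (\<forall>v w :: nat \<Rightarrow> real. (\<forall>i\<in>E. v i > 0) \<longrightarrow>
        (\<forall>t::complex. f (\<lambda>i. t * complex_of_real (v i) + complex_of_real (w i)) = 0
                       \<longrightarrow> t \<in> \<real>))"

definition half_plane_property :: "nat set \<Rightarrow> nat set set \<Rightarrow> bool" where
  "half_plane_property E Bs \<longleftrightarrow> stable E (basis_gen_poly Bs)"

end

theory Submission
  imports Defs "HOL-Computational_Algebra.Fundamental_Theorem_Algebra"
begin

lemma Im_inv_neg: fixes w :: complex assumes "Im w > 0" shows "Im (1 / w) < 0"
proof -
  have "w \<noteq> 0" using assms by auto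
  hence "(Re w)\<^sup>2 + (Im w)\<^sup>2 > 0" using assms by (simp add: add_nonneg_pos)
  thus ?thesis using assms by (simp add: Im_divide divide_neg_pos)
qed

lemma GL_aux:
  fixes p :: "complex poly"
  shows "degree p = n \<Longrightarrow> n \<ge> 1 \<Longrightarrow> (\<forall>s. Im s \<ge> 0 \<longrightarrow> poly p s \<noteq> 0) \<Longrightarrow>
         (\<forall>s. Im s \<ge> 0 \<longrightarrow> Im (poly (pderiv p) s / poly p s) < 0)"
proof (induction n arbitrary: p)
  case 0 then show ?case by simp
next
  case (Suc n p)
  have "\<not> constant (poly p)" using Suc.prems(1) constant_degree by (metis nat.distinct(1))
  then obtain r where r: "poly p r = 0" using fundamental_theorem_of_algebra by blast
  have imr: "Im r < 0" using Suc.prems(3) r by (meson not_le)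
  obtain q where q: "p = [:- r, 1:] * q" using r poly_eq_0_iff_dvd by (metis dvdE)
  have qnz: "q \<noteq> 0" using q Suc.prems(1) by auto
  have "degree p = degree [:- r, 1:] + degree q" using q qnz by (metis degree_mult_eq pCons_eq_0_iff zero_neq_one)
  hence dq: "degree q = n" using Suc.prems(1) by simp
  have qroots: "\<forall>s. Im s \<ge> 0 \<longrightarrow> poly q s \<noteq> 0" using Suc.prems(3) q by auto
  have d1: "pderiv [:- r, 1:] = 1" by (simp add: pderiv_pCons)
  have pd: "pderiv p = q + [:- r, 1:] * pderiv q" unfolding q pderiv_mult d1 by simp
  show ?case
  proof (intro allI impI)
    fix s :: complex assume s: "Im s \<ge> 0"
    have sr: "Im (s - r) > 0" using s imr by simp
    hence srnz: "s - r \<noteq> 0" by auto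
    have qs: "poly q s \<noteq> 0" using qroots s by auto
    have eq: "poly (pderiv p) s / poly p s = 1 / (s - r) + poly (pderiv q) s / poly q s"
    proof -
      have pps: "poly (pderiv p) s = poly q s + (s - r) * poly (pderiv q) s" by (simp add: pd algebra_simps)
      have pp: "poly p s = (s - r) * poly q s" by (simp add: q algebra_simps)
      show ?thesis unfolding pps pp using srnz qs by (simp add: field_simps)
    qed
    show "Im (poly (pderiv p) s / poly p s) < 0"
    proof (cases "n = 0")
      case True
      then have "pderiv q = 0" using dq by (simp add: pderiv_eq_0_iff)
      then show ?thesis using eq Im_inv_neg[OF sr] by simp
    next
      case False
      then have "Im (poly (pderiv q) s / poly q s) < 0" using Suc.IH[OF dq] qroots s by auto
      then show ?thesis using eq Im_inv_neg[OF sr] by simp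
    qed
  qed
qed

lemma GL:
  fixes p :: "complex poly"
  assumes "degree p \<ge> 1" "\<forall>s. Im s \<ge> 0 \<longrightarrow> poly p s \<noteq> 0"
  shows "\<forall>s. Im s \<ge> 0 \<longrightarrow> poly (pderiv p) s \<noteq> 0"
proof (intro allI impI)
  fix s :: complex assume s: "Im s \<ge> 0"
  have "Im (poly (pderiv p) s / poly p s) < 0" using GL_aux[OF refl assms(1) assms(2)] s by blast
  thus "poly (pderiv p) s \<noteq> 0" by auto
qed


lemma im_pos_nz: "Im (w::complex) > 0 \<Longrightarrow> w \<noteq> 0" by auto

lemma norm_sq_cnj: fixes u :: complex shows "u * cnj u = of_real ((cmod u)^2)"
  by (rule complex_norm_square[symmetric])

lemma Im_mult_real: fixes p :: complex shows "Im (p * of_real t) = Im p * t"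
  by simp

lemma blk2:
  fixes p q s :: complex
  assumes "Im p > 0" "Im q > 0" "Im s \<ge> 0"
  shows "Im (p + q - (p - q)^2 / (s + p + q)) \<ge> 0"
proof -
  define w where "w = s + p + q"
  have wnz: "w \<noteq> 0" using assms unfolding w_def by (intro im_pos_nz) simp
  define u where "u = - (p - q) / w"
  have hu: "u * w = - (p - q)" using wnz unfolding u_def by simp
  have id: "p + q - (p - q)^2 / w = p * ((1 + u) * cnj (1 + u)) + q * ((1 - u) * cnj (1 - u)) + s * (u * cnj u)"
  proof -
    have "(p - q)^2 / w = - (p - q) * u" using wnz unfolding u_def by (simp add: power2_eq_square algebra_simps)
    moreover have "p * ((1 + u) * cnj (1 + u)) + q * ((1 - u) * cnj (1 - u)) + s * (u * cnj u)
        = (p + q) + (p - q) * u + (p - q) * cnj u + (u * w) * cnj u"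
      unfolding w_def by (simp add: algebra_simps)
    ultimately show ?thesis using hu by (simp add: algebra_simps)
  qed
  have "Im (p + q - (p - q)^2 / (s + p + q)) = Im p * (cmod (1 + u))^2 + Im q * (cmod (1 - u))^2 + Im s * (cmod u)^2"
    using id unfolding w_def norm_sq_cnj by simp
  also have "\<dots> \<ge> 0" using assms by (intro add_nonneg_nonneg mult_nonneg_nonneg) auto
  finally show ?thesis .
qed

lemma blk1:
  fixes z s :: complex
  assumes "Im z > 0" "Im s \<ge> 0"
  shows "Im (z - z^2 / (s + z)) \<ge> 0"
proof -
  define w where "w = s + z"
  have wnz: "w \<noteq> 0" using assms unfolding w_def by (intro im_pos_nz) simp
  define u where "u = - z / w"
  have hu: "u * w = - z" using wnz unfolding u_def by simp
  have id: "z - z^2 / w = z * ((1 + u) * cnj (1 + u)) + s * (u * cnj u)"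
  proof -
    have "z^2 / w = - z * u" using wnz unfolding u_def by (simp add: power2_eq_square)
    moreover have "z * ((1 + u) * cnj (1 + u)) + s * (u * cnj u) = z + z * u + z * cnj u + (u * w) * cnj u"
      unfolding w_def by (simp add: algebra_simps)
    ultimately show ?thesis using hu by (simp add: algebra_simps)
  qed
  have "Im (z - z^2 / (s + z)) = Im z * (cmod (1 + u))^2 + Im s * (cmod u)^2"
    using id unfolding w_def norm_sq_cnj by simp
  also have "\<dots> \<ge> 0" using assms by (intro add_nonneg_nonneg mult_nonneg_nonneg) auto
  finally show ?thesis .
qed

definition Dp :: "complex \<Rightarrow> complex \<Rightarrow> complex \<Rightarrow> complex \<Rightarrow> complex \<Rightarrow> complex \<Rightarrow> complex \<Rightarrow> complex \<Rightarrow> complex poly" where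
 "Dp a b c d y z1 z2 z3 =
   [:a+b+c+d+4*y+z1+z2+z3, 1:] * [:a+b,1:] * [:c+d,1:] * [:z1,1:] * [:z2,1:] * [:z3,1:]
   - smult ((a-b)^2) ([:c+d,1:] * [:z1,1:] * [:z2,1:] * [:z3,1:])
   - smult ((c-d)^2) ([:a+b,1:] * [:z1,1:] * [:z2,1:] * [:z3,1:])
   - smult (z1^2) ([:a+b,1:] * [:c+d,1:] * [:z2,1:] * [:z3,1:])
   - smult (z2^2) ([:a+b,1:] * [:c+d,1:] * [:z1,1:] * [:z3,1:])
   - smult (z3^2) ([:a+b,1:] * [:c+d,1:] * [:z1,1:] * [:z2,1:])"


lemma ident6:
  fixes A s X1 X2 Z1 Z2 Z3 t1 t2 t3 t4 t5 :: complex
  shows "(A + s) * X1 * X2 * Z1 * Z2 * Z3 - (t1 * X1) * (X2 * Z1 * Z2 * Z3) - (t2 * X2) * (X1 * Z1 * Z2 * Z3)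
     - (t3 * Z1) * (X1 * X2 * Z2 * Z3) - (t4 * Z2) * (X1 * X2 * Z1 * Z3) - (t5 * Z3) * (X1 * X2 * Z1 * Z2)
     = X1 * X2 * Z1 * Z2 * Z3 * (A + s - t1 - t2 - t3 - t4 - t5)"
  by (simp add: algebra_simps)

lemma poly_lin: "poly [:c, 1:] (s::complex) = c + s" by simp

lemma Dp_nz:
  fixes a b c d y z1 z2 z3 :: complex
  assumes "Im a > 0" "Im b > 0" "Im c > 0" "Im d > 0" "Im y > 0" "Im z1 > 0" "Im z2 > 0" "Im z3 > 0"
  shows "\<forall>s. Im s \<ge> 0 \<longrightarrow> poly (Dp a b c d y z1 z2 z3) s \<noteq> 0"
proof (intro allI impI)
  fix s :: complex assume s: "Im s \<ge> 0"
  have n1: "s + a + b \<noteq> 0" "s + c + d \<noteq> 0" "s + z1 \<noteq> 0" "s + z2 \<noteq> 0" "s + z3 \<noteq> 0"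
    using assms s by (auto intro!: im_pos_nz)
  define t1 where "t1 = (a - b)^2 / (s + a + b)"
  define t2 where "t2 = (c - d)^2 / (s + c + d)"
  define t3 where "t3 = z1^2 / (s + z1)"
  define t4 where "t4 = z2^2 / (s + z2)"
  define t5 where "t5 = z3^2 / (s + z3)"
  have e1: "(a - b)^2 = t1 * (a + b + s)" using n1 unfolding t1_def by (simp add: add_ac)
  have e2: "(c - d)^2 = t2 * (c + d + s)" using n1 unfolding t2_def by (simp add: add_ac)
  have e3: "z1^2 = t3 * (z1 + s)" using n1 unfolding t3_def by (simp add: add_ac)
  have e4: "z2^2 = t4 * (z2 + s)" using n1 unfolding t4_def by (simp add: add_ac)
  have e5: "z3^2 = t5 * (z3 + s)" using n1 unfolding t5_def by (simp add: add_ac)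
  define h where "h = s + 4*y + (a + b - t1) + (c + d - t2)
     + (z1 - t3) + (z2 - t4) + (z3 - t5)"
  have "Im h \<ge> Im s + 4 * Im y" unfolding h_def t1_def t2_def t3_def t4_def t5_def
    using blk2[OF assms(1,2) s] blk2[OF assms(3,4) s] blk1[OF assms(6) s] blk1[OF assms(7) s] blk1[OF assms(8) s]
    by simp
  hence hnz: "h \<noteq> 0" using s assms(5) by (intro im_pos_nz) linarith
  have "poly (Dp a b c d y z1 z2 z3) s = (a + b + s) * (c + d + s) * (z1 + s) * (z2 + s) * (z3 + s) * h"
  proof -
    have "poly (Dp a b c d y z1 z2 z3) s =
      (a+b+c+d+4*y+z1+z2+z3 + s) * (a+b+s) * (c+d+s) * (z1+s) * (z2+s) * (z3+s)
      - (t1 * (a+b+s)) * ((c+d+s) * (z1+s) * (z2+s) * (z3+s))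
      - (t2 * (c+d+s)) * ((a+b+s) * (z1+s) * (z2+s) * (z3+s))
      - (t3 * (z1+s)) * ((a+b+s) * (c+d+s) * (z2+s) * (z3+s))
      - (t4 * (z2+s)) * ((a+b+s) * (c+d+s) * (z1+s) * (z3+s))
      - (t5 * (z3+s)) * ((a+b+s) * (c+d+s) * (z1+s) * (z2+s))"
      unfolding Dp_def poly_diff poly_mult poly_smult poly_lin e1 e2 e3 e4 e5 by (simp only: mult.assoc)
    also have "\<dots> = (a+b+s) * (c+d+s) * (z1+s) * (z2+s) * (z3+s) * (a+b+c+d+4*y+z1+z2+z3 + s - t1 - t2 - t3 - t4 - t5)"
      by (rule ident6)
    also have "a+b+c+d+4*y+z1+z2+z3 + s - t1 - t2 - t3 - t4 - t5 = h" unfolding h_def by (simp add: algebra_simps)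
    finally show ?thesis by (simp add: add_ac)
  qed
  thus "poly (Dp a b c d y z1 z2 z3) s \<noteq> 0" using n1 hnz by (simp add: add_ac)
qed

lemma E8: "{1..10} - {5,7} = {1,2,3,4,6,8,9,10::nat}"
  by (auto simp: atLeastAtMost_iff; presburger)

definition esym :: "nat set \<Rightarrow> nat \<Rightarrow> (nat \<Rightarrow> complex) \<Rightarrow> complex" where
  "esym A k x = (\<Sum>S\<in>{S. S \<subseteq> A \<and> card S = k}. \<Prod>i\<in>S. x i)"

lemma esym_0: "finite A \<Longrightarrow> esym A 0 x = 1"
proof -
  assume "finite A"
  hence "{S. S \<subseteq> A \<and> card S = 0} = {{}}" by (auto dest: finite_subset)
  thus ?thesis unfolding esym_def by simp
qed

lemma esym_empty: "esym {} (Suc k) x = 0"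
proof -
  have "{S. S \<subseteq> {} \<and> card S = Suc k} = {}" by auto
  thus ?thesis unfolding esym_def by simp
qed

lemma esym_insert:
  assumes fin: "finite A" and a: "a \<notin> A"
  shows "esym (insert a A) (Suc k) x = x a * esym A k x + esym A (Suc k) x"
proof -
  have seteq: "{S. S \<subseteq> insert a A \<and> card S = Suc k} =
     (insert a) ` {S. S \<subseteq> A \<and> card S = k} \<union> {S. S \<subseteq> A \<and> card S = Suc k}"
  proof (intro equalityI subsetI)
    fix S assume "S \<in> {S. S \<subseteq> insert a A \<and> card S = Suc k}"
    hence S: "S \<subseteq> insert a A" "card S = Suc k" by auto
    have finS: "finite S" using S(1) fin by (meson finite_insert finite_subset)
    show "S \<in> (insert a) ` {S. S \<subseteq> A \<and> card S = k} \<union> {S. S \<subseteq> A \<and> card S = Suc k}"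
    proof (cases "a \<in> S")
      case True
      have "S = insert a (S - {a})" using True by auto
      moreover have "S - {a} \<subseteq> A" using S(1) by auto
      moreover have "card (S - {a}) = k" using S(2) True finS by simp
      ultimately show ?thesis by blast
    next
      case False
      then show ?thesis using S by auto
    qed
  next
    fix S assume "S \<in> (insert a) ` {S. S \<subseteq> A \<and> card S = k} \<union> {S. S \<subseteq> A \<and> card S = Suc k}"
    then show "S \<in> {S. S \<subseteq> insert a A \<and> card S = Suc k}"
    proof (elim UnE)
      assume "S \<in> (insert a) ` {S. S \<subseteq> A \<and> card S = k}"
      then obtain T where T: "T \<subseteq> A" "card T = k" "S = insert a T" by auto
      have "finite T" using T(1) fin finite_subset by blast
      moreover have "a \<notin> T" using T(1) a by auto
      ultimately show ?thesis using T by auto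
    next
      assume "S \<in> {S. S \<subseteq> A \<and> card S = Suc k}"
      then show ?thesis by auto
    qed
  qed
  have fin1: "finite {S. S \<subseteq> A \<and> card S = k}" using fin by simp
  have fin2: "finite {S. S \<subseteq> A \<and> card S = Suc k}" using fin by simp
  have disj: "(insert a) ` {S. S \<subseteq> A \<and> card S = k} \<inter> {S. S \<subseteq> A \<and> card S = Suc k} = {}"
    using a by auto
  have inj: "inj_on (insert a) {S. S \<subseteq> A \<and> card S = k}"
    using a by (auto simp: inj_on_def)
  have "esym (insert a A) (Suc k) x =
     (\<Sum>S\<in>(insert a) ` {S. S \<subseteq> A \<and> card S = k}. \<Prod>i\<in>S. x i) + esym A (Suc k) x"
    unfolding esym_def seteq using fin1 fin2 disj by (simp add: sum.union_disjoint)
  also have "(\<Sum>S\<in>(insert a) ` {S. S \<subseteq> A \<and> card S = k}. \<Prod>i\<in>S. x i)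
      = (\<Sum>T\<in>{S. S \<subseteq> A \<and> card S = k}. \<Prod>i\<in>insert a T. x i)"
    using inj by (simp add: sum.reindex)
  also have "\<dots> = (\<Sum>T\<in>{S. S \<subseteq> A \<and> card S = k}. x a * (\<Prod>i\<in>T. x i))"
  proof (rule sum.cong[OF refl])
    fix T assume "T \<in> {S. S \<subseteq> A \<and> card S = k}"
    hence "finite T" "a \<notin> T" using fin a finite_subset by auto
    thus "(\<Prod>i\<in>insert a T. x i) = x a * (\<Prod>i\<in>T. x i)" by simp
  qed
  also have "\<dots> = x a * esym A k x" unfolding esym_def by (simp add: sum_distrib_left)
  finally show ?thesis .
qed

lemma esym8: "esym {1,2,3,4,6,8,9,10} 3 x =
  (\<Sum>S\<in>{S. S \<subseteq> {1,2,3,4,6,8,9,10} \<and> card S = 3}. \<Prod>i\<in>S. x i)" unfolding esym_def ..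

lemma three: "(3::nat) = Suc (Suc (Suc 0))" by simp

lemma esym8v: "esym {1,2,3,4,6,8,9,10} 3 x = x 1 * x 2 * x 3 + x 1 * x 2 * x 4 + x 1 * x 2 * x 6 + x 1 * x 2 * x 8 + x 1 * x 2 * x 9 + x 1 * x 2 * x 10 + x 1 * x 3 * x 4 + x 1 * x 3 * x 6 + x 1 * x 3 * x 8 + x 1 * x 3 * x 9 + x 1 * x 3 * x 10 + x 1 * x 4 * x 6 + x 1 * x 4 * x 8 + x 1 * x 4 * x 9 + x 1 * x 4 * x 10 + x 1 * x 6 * x 8 + x 1 * x 6 * x 9 + x 1 * x 6 * x 10 + x 1 * x 8 * x 9 + x 1 * x 8 * x 10 + x 1 * x 9 * x 10 + x 2 * x 3 * x 4 + x 2 * x 3 * x 6 + x 2 * x 3 * x 8 + x 2 * x 3 * x 9 + x 2 * x 3 * x 10 + x 2 * x 4 * x 6 + x 2 * x 4 * x 8 + x 2 * x 4 * x 9 + x 2 * x 4 * x 10 + x 2 * x 6 * x 8 + x 2 * x 6 * x 9 + x 2 * x 6 * x 10 + x 2 * x 8 * x 9 + x 2 * x 8 * x 10 + x 2 * x 9 * x 10 + x 3 * x 4 * x 6 + x 3 * x 4 * x 8 + x 3 * x 4 * x 9 + x 3 * x 4 * x 10 + x 3 * x 6 * x 8 + x 3 * x 6 * x 9 + x 3 * x 6 * x 10 + x 3 * x 8 * x 9 + x 3 * x 8 * x 10 + x 3 * x 9 * x 10 + x 4 * x 6 * x 8 + x 4 * x 6 * x 9 + x 4 * x 6 * x 10 +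 x 4 * x 8 * x 9 + x 4 * x 8 * x 10 + x 4 * x 9 * x 10 + x 6 * x 8 * x 9 + x 6 * x 8 * x 10 + x 6 * x 9 * x 10 + x 8 * x 9 * x 10"
  unfolding three by (simp add: esym_insert esym_0 esym_empty algebra_simps)


lemma Bs_eq: "deletion_bases (contraction_bases V10_bases 5) 7 =
   {S. S \<subseteq> {1,2,3,4,6,8,9,10} \<and> card S = 3} - {{1,2,6},{3,4,6}}"
proof (intro equalityI subsetI)
  fix S assume "S \<in> deletion_bases (contraction_bases V10_bases 5) 7"
  then obtain B where B: "B \<in> V10_bases" "5 \<in> B" "S = B - {5}" "7 \<notin> S"
    unfolding deletion_bases_def contraction_bases_def by auto
  have Bsub: "B \<subseteq> {1..10}" and Bc: "card B = 4" using B(1) unfolding V10_bases_def by auto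
  have finB: "finite B" using Bsub finite_subset by blast
  have "S \<subseteq> {1..10} - {5,7}" using B Bsub by auto
  hence Ssub: "S \<subseteq> {1,2,3,4,6,8,9,10}" using E8 by simp
  have Sc: "card S = 3" using B(2,3) Bc finB by simp
  have Bins: "B = insert 5 S" using B(2,3) by auto
  have "S \<noteq> {1,2,6}"
  proof
    assume "S = {1,2,6}"
    hence "B = {1,2,5,6}" using Bins by auto
    thus False using B(1) unfolding V10_bases_def by simp
  qed
  moreover have "S \<noteq> {3,4,6}"
  proof
    assume "S = {3,4,6}"
    hence "B = {3,4,5,6}" using Bins by auto
    thus False using B(1) unfolding V10_bases_def by simp
  qed
  ultimately show "S \<in> {S. S \<subseteq> {1,2,3,4,6,8,9,10} \<and> card S = 3} - {{1,2,6},{3,4,6}}"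
    using Ssub Sc by auto
next
  fix S :: "nat set" assume S: "S \<in> {S. S \<subseteq> {1,2,3,4,6,8,9,10} \<and> card S = 3} - {{1,2,6},{3,4,6}}"
  hence Ssub: "S \<subseteq> {1,2,3,4,6,8,9,10}" and Sc: "card S = 3" and S1: "S \<noteq> {1,2,6}" and S2: "S \<noteq> {3,4,6}"
    by auto
  have finS: "finite S" using Ssub finite_subset by blast
  have n5: "5 \<notin> S" and n7: "7 \<notin> S" using Ssub by auto
  define B where "B = insert 5 S"
  have "B \<subseteq> {1..10}" using Ssub unfolding B_def by auto
  moreover have "card B = 4" unfolding B_def using finS n5 Sc by simp
  moreover have "B \<noteq> {1,2,5,6}"
  proof
    assume "B = {1,2,5,6}"
    hence "S = {1,2,5,6} - {5}" unfolding B_def using n5 by auto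
    thus False using S1 by auto
  qed
  moreover have "B \<noteq> {3,4,5,6}"
  proof
    assume "B = {3,4,5,6}"
    hence "S = {3,4,5,6} - {5}" unfolding B_def using n5 by auto
    thus False using S2 by auto
  qed
  moreover have "B \<noteq> {1,2,3,4}" "B \<noteq> {1,2,7,8}" "B \<noteq> {1,2,9,10}" "B \<noteq> {7,8,9,10}" "B \<noteq> {5,6,7,8}"
    unfolding B_def using n5 n7 by (auto simp: insert_eq_iff)
  ultimately have "B \<in> V10_bases" unfolding V10_bases_def by auto
  moreover have "S = B - {5}" unfolding B_def using n5 by auto
  ultimately show "S \<in> deletion_bases (contraction_bases V10_bases 5) 7"
    unfolding deletion_bases_def contraction_bases_def B_def using n7 by auto
qed


definition fp :: "complex \<Rightarrow> complex \<Rightarrow> complex \<Rightarrow> complex \<Rightarrow> complex \<Rightarrow> complex \<Rightarrow> complex \<Rightarrow> complex \<Rightarrow> complex" where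
  "fp a b c d y z1 z2 z3 = a * b * c + a * b * d + a * b * z1 + a * b * z2 + a * b * z3 + a * c * d + a * c * y + a * c * z1 + a * c * z2 + a * c * z3 + a * d * y + a * d * z1 + a * d * z2 + a * d * z3 + a * y * z1 + a * y * z2 + a * y * z3 + a * z1 * z2 + a * z1 * z3 + a * z2 * z3 + b * c * d + b * c * y + b * c * z1 + b * c * z2 + b * c * z3 + b * d * y + b * d * z1 + b * d * z2 + b * d * z3 + b * y * z1 + b * y * z2 + b * y * z3 + b * z1 * z2 + b * z1 * z3 + b * z2 * z3 + c * d * z1 + c * d * z2 + c * d * z3 + c * y * z1 + c * y * z2 + c * y * z3 + c * z1 * z2 + c * z1 * z3 + c * z2 * z3 + d * y * z1 + d * y * z2 + d * y * z3 + d * z1 * z2 + d * z1 * z3 + d * z2 * z3 + y * z1 * z2 + y * z1 * z3 + y * z2 * z3 + z1 * z2 * z3"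
lemma c6: "coeff (Dp a b c d y z1 z2 z3) 6 = 1"
  unfolding Dp_def by (simp add: numeral_eq_Suc)
lemma c3: "coeff (Dp a b c d y z1 z2 z3) 3 = 4 * fp a b c d y z1 z2 z3"
  unfolding Dp_def fp_def by (simp add: numeral_eq_Suc power2_eq_square algebra_simps)

lemma f_nz:
  fixes a b c d y z1 z2 z3 :: complex
  assumes "Im a > 0" "Im b > 0" "Im c > 0" "Im d > 0" "Im y > 0" "Im z1 > 0" "Im z2 > 0" "Im z3 > 0"
  shows "fp a b c d y z1 z2 z3 \<noteq> 0"
proof -
  define p0 where "p0 = Dp a b c d y z1 z2 z3"
  have r0: "\<forall>s. Im s \<ge> 0 \<longrightarrow> poly p0 s \<noteq> 0" unfolding p0_def using Dp_nz[OF assms] .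
  have "coeff p0 6 \<noteq> 0" unfolding p0_def using c6 by simp
  hence d0: "degree p0 \<ge> 6" by (rule le_degree)
  have r1: "\<forall>s. Im s \<ge> 0 \<longrightarrow> poly (pderiv p0) s \<noteq> 0" using GL[OF _ r0] d0 by simp
  have d1: "degree (pderiv p0) \<ge> 5" using d0 by (simp add: degree_pderiv)
  have r2: "\<forall>s. Im s \<ge> 0 \<longrightarrow> poly (pderiv (pderiv p0)) s \<noteq> 0" using GL[OF _ r1] d1 by simp
  have d2: "degree (pderiv (pderiv p0)) \<ge> 4" using d1 by (simp add: degree_pderiv)
  have r3: "\<forall>s. Im s \<ge> 0 \<longrightarrow> poly (pderiv (pderiv (pderiv p0))) s \<noteq> 0" using GL[OF _ r2] d2 by simp
  hence "poly (pderiv (pderiv (pderiv p0))) 0 \<noteq> 0" by simp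
  moreover have "poly (pderiv (pderiv (pderiv p0))) 0 = 6 * coeff p0 3"
    by (simp add: poly_0_coeff_0 coeff_pderiv numeral_eq_Suc)
  ultimately show ?thesis unfolding p0_def c3 by simp
qed

lemma fp_cnj: "cnj (fp a b c d y z1 z2 z3) = fp (cnj a) (cnj b) (cnj c) (cnj d) (cnj y) (cnj z1) (cnj z2) (cnj z3)"
  unfolding fp_def by simp

lemma bgp: "basis_gen_poly (deletion_bases (contraction_bases V10_bases 5) 7) x =
    fp (x 1) (x 2) (x 3) (x 4) (x 6) (x 8) (x 9) (x 10)"
proof -
  have sub: "{{1,2,6},{3,4,6}} \<subseteq> {S. S \<subseteq> {1,2,3,4,6,8,9,10::nat} \<and> card S = 3}" by auto
  have fin: "finite {S. S \<subseteq> {1,2,3,4,6,8,9,10::nat} \<and> card S = 3}" by simp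
  have ne: "{1,2,6::nat} \<noteq> {3,4,6}"
  proof
    assume "{1,2,6::nat} = {3,4,6}"
    hence "(1::nat) \<in> {3,4,6}" by blast
    thus False by simp
  qed
  have "basis_gen_poly (deletion_bases (contraction_bases V10_bases 5) 7) x =
     esym {1,2,3,4,6,8,9,10} 3 x - (x 1 * x 2 * x 6 + x 3 * x 4 * x 6)"
    unfolding basis_gen_poly_def Bs_eq esym8 sum_diff[OF fin sub] using ne by (simp add: mult.assoc)
  also have "\<dots> = fp (x 1) (x 2) (x 3) (x 4) (x 6) (x 8) (x 9) (x 10)"
    unfolding esym8v fp_def by (simp add: algebra_simps)
  finally show ?thesis .
qed

theorem lemma4p2:
  shows "half_plane_property ({1..10} - {5, 7})
           (deletion_bases (contraction_bases V10_bases 5) 7)"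
  proof -
  have E: "\<And>i. i \<in> {1,2,3,4,6,8,9,10} \<Longrightarrow> i \<in> ({1..10} - {5, 7} :: nat set)" using E8 by simp
  show ?thesis
  unfolding half_plane_property_def stable_def
  proof (intro allI impI)
    fix v w :: "nat \<Rightarrow> real" and t :: complex
    assume vpos: "\<forall>i\<in>{1..10} - {5, 7}. 0 < v i"
    assume eq: "basis_gen_poly (deletion_bases (contraction_bases V10_bases 5) 7)
        (\<lambda>i. t * complex_of_real (v i) + complex_of_real (w i)) = 0"
    define z where "z = (\<lambda>i. t * complex_of_real (v i) + complex_of_real (w i))"
    have eq0: "fp (z 1) (z 2) (z 3) (z 4) (z 6) (z 8) (z 9) (z 10) = 0" using eq unfolding z_def bgp .
    have v: "v 1 > 0" "v 2 > 0" "v 3 > 0" "v 4 > 0" "v 6 > 0" "v 8 > 0" "v 9 > 0" "v 10 > 0"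
      using vpos E by auto
    have Imz: "\<And>i. Im (z i) = Im t * v i" unfolding z_def by simp
    have "Im t = 0"
    proof (rule ccontr)
      assume nz: "Im t \<noteq> 0"
      show False
      proof (cases "Im t > 0")
        case True
        have "fp (z 1) (z 2) (z 3) (z 4) (z 6) (z 8) (z 9) (z 10) \<noteq> 0"
          by (rule f_nz) (use True v in \<open>simp_all add: Imz\<close>)
        then show False using eq0 by simp
      next
        case False
        hence neg: "Im t < 0" using nz by simp
        have "fp (cnj (z 1)) (cnj (z 2)) (cnj (z 3)) (cnj (z 4)) (cnj (z 6)) (cnj (z 8)) (cnj (z 9)) (cnj (z 10)) \<noteq> 0"
          by (rule f_nz) (use neg v in \<open>simp_all add: Imz mult_neg_pos\<close>)
        moreover have "fp (cnj (z 1)) (cnj (z 2)) (cnj (z 3)) (cnj (z 4)) (cnj (z 6)) (cnj (z 8)) (cnj (z 9)) (cnj (z 10)) = 0"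
          using eq0 fp_cnj[symmetric] by simp
        ultimately show False by simp
      qed
    qed
    then show "t \<in> \<real>" by (simp add: complex_is_Real_iff)
  qed
qed

end
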